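(* Let $\mathcal F=(A,X,f)$ be a fuzzy automaton. A word $w\in X^*$ D3-merges two states $a,b\in A$ in $\mathcal F$ if and only if it D3-merges them in the associated NFA $\hat{\mathcal F}$. Consequently, a complete fuzzy automaton is D3-directable if and only if every pair of its states is D3-merged by some word.
   Context: A fuzzy automaton is a triple $\mathcal F=(A,X,f)$ with $A$ a finite nonempty set of states, $X$ a finite nonempty alphabet, and $f:A\times X\times A\to[0,1]$, extended to words by $f^*(a,\varepsilon,a)=1$, $f^*(a,\varepsilon,b)=0$ ($b\neq a$), $f^*(a,vx,b)=\max_{c\in A}\min\{f^*(a,v,c),f(c,x,b)\}$. Let $\mathcal F(a,w)=\{b\in A\mid f^*(a,w,b)>0\}$. $\mathcal F$ is complete if $\mathcal F(a,x)\neq\emptyset$ for all $a\in A$, $x\in X$. A word $w$ D3-merges $a,b$ in $\mathcal F$ if $\mathcal F(a,w)\cap\mathcal F(b,w)\ne\emptyset$. $\mathcal F$ is D3-directable if some $w\in X^*$ and $c\in A$ satisfy $c\in\mathcal F(a,w)$ for all $a\in A$. An NFA $\mathcal N=(A,X)$ assigns to each $x\in X$ a relation $x^{\mathcal N}\subseteq A\times A$, extended to words by $H\varepsilon^{\mathcal N}=H$, $Hx^{\mathcal N}=\bigcup_{a\in H}\{b\mid(a,b)\in x^{\mathcal N}\}$, $H(vx)^{\mathcal N}=(Hv^{\mathcal N})x^{\mathcal N}$, $aw^{\mathcal N}=\{a\}w^{\mathcal N}$; $w$ D3-merges $a,b$ in $\mathcal N$ if $aw^{\mathcal N}\cap bw^{\mathcal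 N}\neq\emptyset$. The associated NFA of $\mathcal F$ is $\hat{\mathcal F}=(A,X)$ with $ax^{\hat{\mathcal F}}=\{b\in A\mid f(a,x,b)>0\}$. *)

theory Defs
  imports Complex_Main
begin

definition fuzzy_aut :: "('a::finite \<Rightarrow> 'x::finite \<Rightarrow> 'a \<Rightarrow> real) \<Rightarrow> bool" where
  "fuzzy_aut f \<longleftrightarrow> (\<forall>a x b. 0 \<le> f a x b \<and> f a x b \<le> 1)"

(* f* on reversed words: fstar_rev f a (x # v) b = f*(a, (rev v) x, b) *)
fun fstar_rev :: "('a::finite \<Rightarrow> 'x \<Rightarrow> 'a \<Rightarrow> real) \<Rightarrow> 'a \<Rightarrow> 'x list \<Rightarrow> 'a \<Rightarrow> real" where
  "fstar_rev f a [] b = (if b = a then 1 else 0)"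
| "fstar_rev f a (x # v) b = Max ((\<lambda>c. min (fstar_rev f a v c) (f c x b)) ` UNIV)"

definition fstar :: "('a::finite \<Rightarrow> 'x \<Rightarrow> 'a \<Rightarrow> real) \<Rightarrow> 'a \<Rightarrow> 'x list \<Rightarrow> 'a \<Rightarrow> real" where
  "fstar f a w b = fstar_rev f a (rev w) b"

definition freach :: "('a::finite \<Rightarrow> 'x \<Rightarrow> 'a \<Rightarrow> real) \<Rightarrow> 'a \<Rightarrow> 'x list \<Rightarrow> 'a set" where
  "freach f a w = {b. fstar f a w b > 0}"

definition fcomplete :: "('a::finite \<Rightarrow> 'x \<Rightarrow> 'a \<Rightarrow> real) \<Rightarrow> bool" where
  "fcomplete f \<longleftrightarrow> (\<forall>a x. freach f a [x] \<noteq> {})"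

definition f_D3_merges :: "('a::finite \<Rightarrow> 'x \<Rightarrow> 'a \<Rightarrow> real) \<Rightarrow> 'x list \<Rightarrow> 'a \<Rightarrow> 'a \<Rightarrow> bool" where
  "f_D3_merges f w a b \<longleftrightarrow> freach f a w \<inter> freach f b w \<noteq> {}"

definition f_D3_directable :: "('a::finite \<Rightarrow> 'x \<Rightarrow> 'a \<Rightarrow> real) \<Rightarrow> bool" where
  "f_D3_directable f \<longleftrightarrow> (\<exists>w c. \<forall>a. c \<in> freach f a w)"

definition nfa_img :: "('x \<Rightarrow> ('a \<times> 'a) set) \<Rightarrow> 'a set \<Rightarrow> 'x list \<Rightarrow> 'a set" where
  "nfa_img N H w = foldl (\<lambda>S x. N x `` S) H w"

definition nfa_D3_merges :: "('x \<Rightarrow> ('a \<times> 'a) set) \<Rightarrow> 'x list \<Rightarrow> 'a \<Rightarrow> 'a \<Rightarrow> bool" where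
  "nfa_D3_merges N w a b \<longleftrightarrow> nfa_img N {a} w \<inter> nfa_img N {b} w \<noteq> {}"

definition assoc_nfa :: "('a::finite \<Rightarrow> 'x \<Rightarrow> 'a \<Rightarrow> real) \<Rightarrow> 'x \<Rightarrow> ('a \<times> 'a) set" where
  "assoc_nfa f x = {(a, b). f a x b > 0}"

end

theory Submission
  imports Defs
begin

lemma fstar_rev_pos:
  "fstar_rev f a (x # v) b > 0 \<longleftrightarrow> (\<exists>c. fstar_rev f a v c > 0 \<and> f c x b > 0)"
  by (simp add: Max_gr_iff)

lemma freach_nil: "freach f a [] = {a}"
  by (auto simp: freach_def fstar_def)

lemma freach_snoc: "freach f a (w @ [x]) = {b. \<exists>c\<in>freach f a w. f c x b > 0}"
proof -
  have "fstar f a (w @ [x]) b > 0 \<longleftrightarrow> (\<exists>c. fstar f a w c > 0 \<and> f c x b > 0)" for b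
    unfolding fstar_def using fstar_rev_pos[of f a x "rev w" b] by simp
  then show ?thesis by (auto simp: freach_def)
qed

lemma freach_nfa: "freach f a w = nfa_img (assoc_nfa f) {a} w"
proof (induction w rule: rev_induct)
  case Nil then show ?case by (simp add: freach_nil nfa_img_def)
next
  case (snoc x w)
  have "nfa_img (assoc_nfa f) {a} (w @ [x]) = assoc_nfa f x `` nfa_img (assoc_nfa f) {a} w"
    by (simp add: nfa_img_def)
  also have "\<dots> = {b. \<exists>c\<in>nfa_img (assoc_nfa f) {a} w. f c x b > 0}"
    by (auto simp: assoc_nfa_def Image_def)
  finally show ?case using snoc unfolding freach_snoc by simp
qed

lemma freach_app: "c \<in> freach f a w \<Longrightarrow> d \<in> freach f c u \<Longrightarrow> d \<in> freach f a (w @ u)"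
proof (induction u arbitrary: d rule: rev_induct)
  case Nil then show ?case by (simp add: freach_nil)
next
  case (snoc x u)
  then obtain e where "e \<in> freach f c u" "f e x d > 0" by (auto simp: freach_snoc)
  with snoc show ?case
    by (metis (mono_tags, lifting) append_assoc freach_snoc mem_Collect_eq)
qed

lemma freach_ne: "fcomplete f \<Longrightarrow> freach f a w \<noteq> {}"
proof (induction w rule: rev_induct)
  case Nil then show ?case by (simp add: freach_nil)
next
  case (snoc x w)
  then obtain c where c: "c \<in> freach f a w" by auto
  from snoc(2) obtain d where "d \<in> freach f c [x]" unfolding fcomplete_def by blast
  then show ?case using freach_app[OF c] by blast
qed

lemma set_direct:
  assumes "fcomplete f" "\<forall>a b. \<exists>w. f_D3_merges f w a b" "finite S"
  shows "\<exists>w c. \<forall>a\<in>S. c \<in> freach f a w"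
  using assms(3)
proof (induction S rule: finite_induct)
  case empty then show ?case by auto
next
  case (insert d S)
  then obtain w c where wc: "\<forall>a\<in>S. c \<in> freach f a w" by auto
  obtain e where e: "e \<in> freach f d w" using freach_ne[OF assms(1)] by blast
  obtain u where "f_D3_merges f u c e" using assms(2) by blast
  then obtain c' where c': "c' \<in> freach f c u" "c' \<in> freach f e u"
    by (auto simp: f_D3_merges_def)
  have "\<forall>a\<in>insert d S. c' \<in> freach f a (w @ u)"
    using wc e c' freach_app by blast
  then show ?case by blast
qed

theorem lemma5p2:
  fixes f :: "'a::finite \<Rightarrow> 'x::finite \<Rightarrow> 'a \<Rightarrow> real"
  assumes "fuzzy_aut f"
  shows "(\<forall>w a b. f_D3_merges f w a b \<longleftrightarrow> nfa_D3_merges (assoc_nfa f) w a b)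
       \<and> (fcomplete f \<longrightarrow> (f_D3_directable f \<longleftrightarrow> (\<forall>a b. \<exists>w. f_D3_merges f w a b)))"
proof (intro conjI allI impI iffI)
  fix w a b show "f_D3_merges f w a b \<Longrightarrow> nfa_D3_merges (assoc_nfa f) w a b"
    by (simp add: f_D3_merges_def nfa_D3_merges_def freach_nfa)
  show "nfa_D3_merges (assoc_nfa f) w a b \<Longrightarrow> f_D3_merges f w a b"
    by (simp add: f_D3_merges_def nfa_D3_merges_def freach_nfa)
next
  fix a b assume "f_D3_directable f"
  then show "\<exists>w. f_D3_merges f w a b" by (auto simp: f_D3_directable_def f_D3_merges_def)
next
  assume "fcomplete f" "\<forall>a b. \<exists>w. f_D3_merges f w a b"
  from set_direct[OF this, of UNIV] show "f_D3_directable f"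
    by (simp add: f_D3_directable_def)
qed

end
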